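(* Let $X$ be a real Hausdorff locally convex topological vector space, let $f:X\to\overline{\mathbb R}$ be proper, convex and lower semicontinuous, and let $U\subseteq\operatorname{dom} f$ be self-segment-dense in $\operatorname{dom} f$. Then $f=\overline{f_U}$ on $\operatorname{co}(U)$ and $\overline{f_U}=\overline{f_{\operatorname{co}(U)}}$ on $X$.
   Context: $\overline{\mathbb R}=\mathbb R\cup\{\pm\infty\}$; $\operatorname{dom} f=\{x:f(x)<+\infty\}$; proper: $\operatorname{dom} f\ne\emptyset$ and $f>-\infty$. $\operatorname{co}$ is the convex hull. For $W\subseteq\operatorname{dom} f$: $\operatorname{epi} f_W=\{(w,r)\in W\times\mathbb R:f(w)\le r\}$ and $\overline{f_W}$ is the function on $X$ whose epigraph is $\operatorname{cl}(\operatorname{epi} f_W)$ in $X\times\mathbb R$, i.e. $\overline{f_W}(x)=\inf\{r:(x,r)\in\operatorname{cl}(\operatorname{epi} f_W)\}$ ($\inf\emptyset=+\infty$). $[x,y]=\{x+t(y-x):t\in[0,1]\}$. Self-segment-dense: for convex $V$ and $U\subseteq V$, $U$ is self-segment-dense in $V$ if $V\subseteq\operatorname{cl}U$ and for all $x,y\in U$, $[x,y]\cap U$ is dense in $[x,y]$. *)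

theory Defs
  imports "HOL-Analysis.Analysis"
begin

definition lc_tvs :: "'a::{real_vector, t2_space} itself \<Rightarrow> bool" where
  "lc_tvs _ \<longleftrightarrow>
     continuous_on (UNIV :: ('a \<times> 'a) set) (\<lambda>p. fst p + snd p) \<and>
     continuous_on (UNIV :: (real \<times> 'a) set) (\<lambda>p. fst p *\<^sub>R snd p) \<and>
     (\<forall>x::'a. \<forall>W. open W \<and> x \<in> W \<longrightarrow> (\<exists>V. open V \<and> convex V \<and> x \<in> V \<and> V \<subseteq> W))"

definition edom :: "('a \<Rightarrow> ereal) \<Rightarrow> 'a set" where
  "edom f = {x. f x < \<infinity>}"

definition proper_fun :: "('a \<Rightarrow> ereal) \<Rightarrow> bool" where
  "proper_fun f \<longleftrightarrow> edom f \<noteq> {} \<and> (\<forall>x. f x > -\<infinity>)"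

definition epi_on :: "('a \<Rightarrow> ereal) \<Rightarrow> 'a set \<Rightarrow> ('a \<times> real) set" where
  "epi_on f W = {(w, r). w \<in> W \<and> f w \<le> ereal r}"

definition convex_efun :: "('a::real_vector \<Rightarrow> ereal) \<Rightarrow> bool" where
  "convex_efun f \<longleftrightarrow> convex (epi_on f UNIV)"

definition lsc_efun :: "('a::topological_space \<Rightarrow> ereal) \<Rightarrow> bool" where
  "lsc_efun f \<longleftrightarrow> (\<forall>c::ereal. closed {x. f x \<le> c})"

text \<open>The function whose epigraph is the closure of epi f_W (inf of the empty set is +\<infinity>).\<close>
definition closure_fun :: "('a::topological_space \<Rightarrow> ereal) \<Rightarrow> 'a set \<Rightarrow> 'a \<Rightarrow> ereal" where
  "closure_fun f W x = Inf {ereal r | r. (x, r) \<in> closure (epi_on f W)}"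

definition self_segment_dense :: "'a::{real_vector, topological_space} set \<Rightarrow> 'a set \<Rightarrow> bool" where
  "self_segment_dense U V \<longleftrightarrow> U \<subseteq> V \<and> V \<subseteq> closure U \<and>
     (\<forall>x\<in>U. \<forall>y\<in>U. closed_segment x y \<subseteq> closure (closed_segment x y \<inter> U))"

end

theory Submission
  imports Defs
begin


lemma lc_add:
  assumes "lc_tvs TYPE('a::{real_vector,t2_space})"
    and "continuous_on S h1" "continuous_on S h2"
  shows "continuous_on S (\<lambda>x. h1 x + (h2 x::'a))"
proof -
  have c: "continuous_on (UNIV :: ('a \<times> 'a) set) (\<lambda>p. fst p + snd p)"
    using assms(1) unfolding lc_tvs_def by blast
  have "continuous_on S (\<lambda>x. (h1 x, h2 x))" by (intro continuous_on_Pair assms)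
  from continuous_on_compose2[OF c this] show ?thesis by simp
qed

lemma lc_scale:
  assumes "lc_tvs TYPE('a::{real_vector,t2_space})"
    and "continuous_on S r" "continuous_on S h"
  shows "continuous_on S (\<lambda>x. r x *\<^sub>R (h x::'a))"
proof -
  have c: "continuous_on (UNIV :: (real \<times> 'a) set) (\<lambda>p. fst p *\<^sub>R snd p)"
    using assms(1) unfolding lc_tvs_def by blast
  have "continuous_on S (\<lambda>x. (r x, h x))" by (intro continuous_on_Pair assms)
  from continuous_on_compose2[OF c this] show ?thesis by simp
qed

lemma lc_line:
  assumes "lc_tvs TYPE('a::{real_vector,t2_space})"
  shows "continuous_on S (\<lambda>s::real. (1 - s) *\<^sub>R c + s *\<^sub>R (b::'a))"
  by (intro lc_add[OF assms] lc_scale[OF assms] continuous_intros)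

lemma epi_closed:
  assumes "lsc_efun f"
  shows "closed (epi_on f UNIV)"
proof -
  have "open (- epi_on f UNIV)"
  proof (subst open_subopen, intro ballI)
    fix z assume z: "z \<in> - epi_on f UNIV"
    obtain x r where zx: "z = (x, r)" by fastforce
    with z have "f x > ereal r" by (auto simp: epi_on_def)
    then obtain q where q: "ereal r < ereal q" "ereal q < f x"
      by (metis ereal_dense2 less_ereal.simps(1) ereal_less_eq(1) ereal_le_real) 
    let ?A = "{y. f y \<le> ereal q}"
    have "closed ?A" using assms unfolding lsc_efun_def by blast
    then have o: "open ((- ?A) \<times> {..<q})" by (intro open_Times) (auto simp: open_Compl)
    have "(- ?A) \<times> {..<q} \<subseteq> - epi_on f UNIV"
    proof
      fix w assume "w \<in> (- ?A) \<times> {..<q}"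
      then obtain y r' where w: "w = (y, r')" "\<not> f y \<le> ereal q" "r' < q" by auto
      then have "ereal r' < f y" by (metis ereal_less_eq(3) less_imp_le linorder_not_le order_trans)
      then show "w \<in> - epi_on f UNIV" using w by (auto simp: epi_on_def)
    qed
    moreover have "z \<in> (- ?A) \<times> {..<q}" using q zx by auto
    ultimately show "\<exists>T. open T \<and> z \<in> T \<and> T \<subseteq> - epi_on f UNIV" using o by blast
  qed
  then show ?thesis by (simp add: closed_def)
qed

lemma conv_ineq:
  assumes "convex_efun f" "f x \<le> ereal r1" "f p \<le> ereal r2" "0 \<le> s" "s \<le> 1"
  shows "f ((1 - s) *\<^sub>R x + s *\<^sub>R p) \<le> ereal ((1 - s) * r1 + s * r2)"
proof -
  have "(1 - s) *\<^sub>R (x, r1) + s *\<^sub>R (p, r2) \<in> epi_on f UNIV"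
    using assms unfolding convex_efun_def
    by (intro convexD[where s="epi_on f UNIV"]) (auto simp: epi_on_def)
  then show ?thesis by (simp add: epi_on_def)
qed

lemma radial:
  fixes x p :: "'a::{real_vector,t2_space}"
  assumes lc: "lc_tvs TYPE('a)" and cf: "convex_efun f" and pr: "proper_fun f"
    and x: "x \<in> edom f" and p: "p \<in> edom f" and FF: "closed F"
    and V: "V = {x \<in> edom f. \<forall>r. f x \<le> ereal r \<longrightarrow> (x, r) \<in> F}"
    and lim: "0 islimpt {s::real. 0 < s \<and> s \<le> 1 \<and> (1 - s) *\<^sub>R x + s *\<^sub>R p \<in> V}"
  shows "x \<in> V"
proof -
  define T where "T = {s::real. 0 < s \<and> s \<le> 1 \<and> (1 - s) *\<^sub>R x + s *\<^sub>R p \<in> V}"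
  have "\<forall>r. f x \<le> ereal r \<longrightarrow> (x, r) \<in> F"
  proof (intro allI impI)
    fix r assume fr: "f x \<le> ereal r"
    define q where "q = real_of_ereal (f p)"
    have "f p \<noteq> \<infinity>" using p unfolding edom_def by auto
    moreover have "f p \<noteq> - \<infinity>" using pr unfolding proper_fun_def by (metis less_irrefl)
    ultimately have fpq: "f p = ereal q" unfolding q_def by (cases "f p") auto
    define h where "h = (\<lambda>s::real. ((1 - s) *\<^sub>R x + s *\<^sub>R p, (1 - s) * r + s * q))"
    have hc: "continuous_on UNIV h" unfolding h_def
      by (intro continuous_on_Pair lc_line[OF lc] continuous_intros)
    have "(h \<longlongrightarrow> h 0) (at 0 within T)"
    proof -
      have "isCont h 0" using hc by (simp add: continuous_on_eq_continuous_at)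
      then have "(h \<longlongrightarrow> h 0) (at 0)" by (simp add: isCont_def)
      then show ?thesis by (rule tendsto_mono[OF at_le, rotated]) simp
    qed
    moreover have "h 0 = (x, r)" by (simp add: h_def)
    moreover have "at (0::real) within T \<noteq> bot"
      using lim by (simp add: T_def trivial_limit_within)
    moreover have "eventually (\<lambda>s. h s \<in> F) (at 0 within T)"
    proof -
      have "h s \<in> F" if "s \<in> T" for s
      proof -
        have s: "0 < s" "s \<le> 1" "(1 - s) *\<^sub>R x + s *\<^sub>R p \<in> V" using that by (auto simp: T_def)
        have "f ((1 - s) *\<^sub>R x + s *\<^sub>R p) \<le> ereal ((1 - s) * r + s * q)"
          using conv_ineq[OF cf fr, of p q s] fpq s by simp
        then show ?thesis using s(3) unfolding V h_def by blast
      qed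
      then show ?thesis by (simp add: eventually_at_filter)
    qed
    ultimately show "(x, r) \<in> F" using Lim_in_closed_set[OF FF] by metis
  qed
  then show ?thesis using x V by blast
qed

lemma seg_dense:
  fixes b c :: "'a::{real_vector,t2_space}"
  assumes lc: "lc_tvs TYPE('a)"
    and sd: "closed_segment c b \<subseteq> closure (closed_segment c b \<inter> U)"
    and bc: "b \<noteq> c" and t0: "0 \<le> t0" "t0 < 1" and dp: "\<delta> > 0"
  shows "\<exists>t. t0 < t \<and> t < t0 + \<delta> \<and> t \<le> 1 \<and> (1 - t) *\<^sub>R c + t *\<^sub>R b \<in> U"
proof -
  define d where "d = min \<delta> (1 - t0)"
  have d: "d > 0" "d \<le> \<delta>" "t0 + d \<le> 1" using t0 dp by (auto simp: d_def)
  define g where "g = (\<lambda>s::real. (1 - s) *\<^sub>R c + s *\<^sub>R b)"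
  have inj: "s = s'" if "g s = g s'" for s s'
  proof -
    have "(s - s') *\<^sub>R (b - c) = g s - g s'" by (simp add: g_def algebra_simps)
    then have "(s - s') *\<^sub>R (b - c) = 0" using that by simp
    then show ?thesis using bc by simp
  qed
  define K where "K = g ` ({0..t0} \<union> {t0+d..1})"
  have "compact K" unfolding K_def
    by (intro compact_continuous_image compact_Un compact_Icc) (simp add: g_def lc_line[OF lc])
  then have cK: "closed K" by (rule compact_imp_closed)
  define w1 where "w1 = g (t0 + d / 2)"
  have w1seg: "w1 \<in> closed_segment c b" unfolding w1_def g_def closed_segment_def
    using d t0 by (intro CollectI exI[of _ "t0 + d / 2"]) auto
  have "w1 \<notin> K"
  proof
    assume "w1 \<in> K"
    then obtain s where "s \<in> {0..t0} \<union> {t0+d..1}" "g s = w1" unfolding K_def by blast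
    then have "s = t0 + d / 2" using inj unfolding w1_def by blast
    with \<open>s \<in> {0..t0} \<union> {t0+d..1}\<close> d show False by auto
  qed
  then have "(- K) \<inter> closure (closed_segment c b \<inter> U) \<noteq> {}" using w1seg sd by blast
  then have "(- K) \<inter> (closed_segment c b \<inter> U) \<noteq> {}"
    using open_Int_closure_eq_empty[of "- K"] cK by (auto simp: open_Compl)
  then obtain q where q: "q \<notin> K" "q \<in> closed_segment c b" "q \<in> U" by blast
  then obtain t where t: "0 \<le> t" "t \<le> 1" "q = g t" unfolding closed_segment_def g_def by blast
  then have "t \<notin> {0..t0} \<union> {t0+d..1}" using q(1) unfolding K_def by blast
  then have "t0 < t" "t < t0 + d" using t by auto
  then show ?thesis using t q d by (intro exI[of _ t]) (auto simp: g_def)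
qed

lemma hull_comb:
  fixes y b :: "'a::real_vector"
  assumes "0 \<le> u" "u \<le> 1" "u = 0 \<or> y \<in> convex hull A"
  shows "u *\<^sub>R y + (1 - u) *\<^sub>R b \<in> convex hull (insert b A)"
proof (cases "u = 0")
  case True then show ?thesis by (simp add: hull_inc)
next
  case False
  then have "y \<in> convex hull (insert b A)" using assms(3) hull_mono[of A "insert b A"] by blast
  moreover have "b \<in> convex hull (insert b A)" by (simp add: hull_inc)
  ultimately show ?thesis using assms by (intro convexD convex_convex_hull) auto
qed

lemma decomp:
  fixes z b c :: "'a::real_vector"
  assumes "z \<in> convex hull (insert b (insert c A))"
  shows "\<exists>ay ac ab y. 0 \<le> ay \<and> 0 \<le> ac \<and> 0 \<le> ab \<and> ay + ac + ab = 1 \<and>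
     (ay = 0 \<or> y \<in> convex hull A) \<and> z = ay *\<^sub>R y + ac *\<^sub>R c + ab *\<^sub>R b"
proof -
  obtain u v q where uv: "0 \<le> u" "0 \<le> v" "u + v = 1" "q \<in> convex hull (insert c A)"
    "z = u *\<^sub>R b + v *\<^sub>R q"
    using assms convex_hull_insert[of "insert c A" b] by auto
  show ?thesis
  proof (cases "A = {}")
    case True
    then have "q = c" using uv by simp
    then show ?thesis using uv by (intro exI[of _ 0] exI[of _ v] exI[of _ u]) auto
  next
    case False
    obtain u' v' y where uv': "0 \<le> u'" "0 \<le> v'" "u' + v' = 1" "y \<in> convex hull A"
      "q = u' *\<^sub>R c + v' *\<^sub>R y"
      using uv(4) convex_hull_insert[OF False, of c] by auto
    have "z = u *\<^sub>R b + ((v * u') *\<^sub>R c + (v * v') *\<^sub>R y)"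
      using uv(5) uv'(5) by (simp add: scaleR_add_right)
    then have e1: "z = (v * v') *\<^sub>R y + (v * u') *\<^sub>R c + u *\<^sub>R b"
      by (simp add: add.commute add.left_commute)
    have "v * v' + v * u' = v * (u' + v')" by (simp add: algebra_simps)
    then have e2: "v * v' + v * u' + u = 1" using uv(3) uv'(3) by simp
    have "0 \<le> v * v'" "0 \<le> v * u'" using uv(2) uv'(1,2) by simp_all
    then show ?thesis using uv(1) uv'(4) e1 e2 by (intro exI[of _ "v * v'"] exI[of _ "v * u'"] exI[of _ u] exI[of _ y]) blast
  qed
qed



lemma main_ind:
  fixes f :: "'a::{real_vector,t2_space} \<Rightarrow> ereal"
  assumes lc: "lc_tvs TYPE('a)" and cf: "convex_efun f" and pr: "proper_fun f"
    and Ud: "U \<subseteq> edom f"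
    and sd: "\<forall>x\<in>U. \<forall>y\<in>U. closed_segment x y \<subseteq> closure (closed_segment x y \<inter> U)"
    and cd: "convex (edom f)" and FF: "closed F"
    and UV: "U \<subseteq> V"
    and V: "V = {x \<in> edom f. \<forall>r. f x \<le> ereal r \<longrightarrow> (x, r) \<in> F}"
  shows "finite S \<Longrightarrow> S \<subseteq> U \<Longrightarrow> card S \<le> n \<Longrightarrow> convex hull S \<subseteq> V"
proof (induction n arbitrary: S)
  case 0
  then have "S = {}" by simp
  then show ?case by simp
next
  case (Suc n)
  show ?case
  proof (cases "card S \<le> n")
    case True then show ?thesis using Suc by blast
  next
    case False
    then have cS: "card S = Suc n" using Suc.prems by simp
    show ?thesis
    proof (cases "n = 0")
      case True
      then obtain b where "S = {b}" using cS card_1_singletonE by auto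
      then show ?thesis using Suc.prems UV by auto
    next
      case False
      obtain b where b: "b \<in> S" using cS by fastforce
      have "card (S - {b}) = n" using cS b Suc.prems(1) by simp
      then have "S - {b} \<noteq> {}" using False by (metis card.empty)
      then obtain c where c: "c \<in> S - {b}" by blast
      define A where "A = S - {b, c}"
      have SA: "S = insert b (insert c A)" using b c by (auto simp: A_def)
      have bc: "b \<noteq> c" using c by auto
      have bU: "b \<in> U" "c \<in> U" using b c Suc.prems by auto
      have finA: "finite A" "A \<subseteq> U" using Suc.prems by (auto simp: A_def)
      have "card A = card S - card {b, c}" unfolding A_def
        using b c Suc.prems(1) by (intro card_Diff_subset) auto
      then have cardA: "Suc (card A) \<le> n" using cS bc False by simp
      have cardins: "card (insert w A) \<le> n" for w
        using cardA finA by (metis card_insert_le_m1 diff_Suc_1 dual_order.trans card_insert_if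
              Suc_leD le_Suc_eq)
      have hullS_dom: "convex hull S \<subseteq> edom f"
        using Suc.prems(2) Ud cd by (intro hull_minimal) auto
      show ?thesis
      proof
        fix z assume z: "z \<in> convex hull S"
        obtain ay ac ab y where dec: "0 \<le> ay" "0 \<le> ac" "0 \<le> ab" "ay + ac + ab = 1"
          "ay = 0 \<or> y \<in> convex hull A" "z = ay *\<^sub>R y + ac *\<^sub>R c + ab *\<^sub>R b"
          using decomp[of z b c A] z SA by auto
        show "z \<in> V"
        proof (cases "ac = 0")
          case True
          have "z = ay *\<^sub>R y + (1 - ay) *\<^sub>R b" using dec True by simp
          moreover have "ay \<le> 1" using dec True by simp
          moreover have "ay *\<^sub>R y + (1 - ay) *\<^sub>R b \<in> convex hull (insert b A)"
            using hull_comb[of ay y A b] dec(1,5) \<open>ay \<le> 1\<close> by blast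
          ultimately have "z \<in> convex hull (insert b A)" by simp
          moreover have "convex hull (insert b A) \<subseteq> V"
            using Suc.IH[of "insert b A"] finA bU cardins by auto
          ultimately show ?thesis by blast
        next
          case False
          then have ac: "ac > 0" using dec by simp
          show ?thesis
          proof (rule radial[OF lc cf pr _ _ FF V])
            show "z \<in> edom f" using z hullS_dom by blast
            show "b \<in> edom f" using bU Ud by blast
            show "0 islimpt {s. 0 < s \<and> s \<le> 1 \<and> (1 - s) *\<^sub>R z + s *\<^sub>R b \<in> V}"
              unfolding islimpt_approachable_real
            proof (intro allI impI)
              fix e :: real assume e: "e > 0"
              define t0 where "t0 = ab / (ab + ac)"
              have abac: "ab + ac > 0" using dec ac by simp
              have t0: "0 \<le> t0" "t0 < 1" using dec ac abac by (auto simp: t0_def field_simps)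
              have "closed_segment c b \<subseteq> closure (closed_segment c b \<inter> U)" using sd bU by blast
              moreover have "e * ac / (ab + ac) > 0" using e ac abac by simp
              ultimately obtain t where t: "t0 < t" "t < t0 + e * ac / (ab + ac)" "t \<le> 1"
                "(1 - t) *\<^sub>R c + t *\<^sub>R b \<in> U"
                using seg_dense[OF lc _ bc t0] by blast
              define w where "w = (1 - t) *\<^sub>R c + t *\<^sub>R b"
              define D where "D = ac + ay * (1 - t)"
              define s where "s = ((ab + ac) * t - ab) / D"
              define ay' where "ay' = (1 - s) * ay"
              have D: "D > 0" using ac dec t by (simp add: D_def add_pos_nonneg)
              have Dac: "D \<ge> ac" using dec t by (simp add: D_def)
              have num: "(ab + ac) * t - ab > 0"
                using t(1) abac unfolding t0_def by (simp add: field_simps)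
              have num2: "(ab + ac) * t - ab < e * ac"
              proof -
                have "(ab + ac) * t < (ab + ac) * (t0 + e * ac / (ab + ac))"
                  using t(2) abac by simp
                also have "\<dots> = ab + e * ac" using abac unfolding t0_def distrib_left by simp
                finally show ?thesis by simp
              qed
              have s0: "s > 0" using num D by (simp add: s_def)
              have s1m: "1 - s = (1 - t) / D"
              proof -
                have tt: "ab * t + (ac * t + ay * t) = t"
                  using dec(4) by (metis add.assoc add.commute distrib_right mult_1)
                show ?thesis
                  using D dec(4) tt unfolding s_def D_def by (simp add: field_simps)
              qed
              have s1: "s \<le> 1" using s1m D t(3) by (smt (verit) divide_nonneg_pos)
              have se: "s < e"
              proof -
                have "s \<le> ((ab + ac) * t - ab) / ac" unfolding s_def
                  using Dac num ac by (intro divide_left_mono) auto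
                also have "\<dots> < e" using num2 ac by (simp add: field_simps)
                finally show ?thesis .
              qed
              have c1: "(1 - s) * ac = (1 - ay') * (1 - t)"
                unfolding ay'_def s1m using D by (simp add: D_def field_simps)
              have c2: "(1 - s) * ab + s = (1 - ay') * t"
              proof -
                have "(1 - ay') * t = (1 - ay') - (1 - ay') * (1 - t)" by (simp add: algebra_simps)
                also have "\<dots> = (1 - s) * ab + s"
                proof -
                  have abeq: "ab = 1 - ac - ay" using dec(4) by simp
                  show ?thesis using c1 unfolding ay'_def abeq by (simp add: algebra_simps; linarith)
                qed
                finally show ?thesis by simp
              qed
              have lhs: "(1 - s) *\<^sub>R z + s *\<^sub>R b =
                  ((1 - s) * ay) *\<^sub>R y + ((1 - s) * ac) *\<^sub>R c + ((1 - s) * ab + s) *\<^sub>R b"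
                unfolding dec(6) by (simp add: scaleR_add_right scaleR_add_left)
              have rhs: "ay' *\<^sub>R y + (1 - ay') *\<^sub>R w =
                  ay' *\<^sub>R y + ((1 - ay') * (1 - t)) *\<^sub>R c + ((1 - ay') * t) *\<^sub>R b"
                unfolding w_def by (simp add: scaleR_add_right add.assoc)
              have eq: "(1 - s) *\<^sub>R z + s *\<^sub>R b = ay' *\<^sub>R y + (1 - ay') *\<^sub>R w"
                using lhs[unfolded c1 c2] rhs unfolding ay'_def[symmetric] by simp
              have ay'01: "0 \<le> ay'" "ay' \<le> 1"
              proof -
                have "0 \<le> 1 - s" "1 - s \<le> 1" using s0 s1 by auto
                moreover have "ay \<le> 1" using dec by simp
                ultimately show "0 \<le> ay'" "ay' \<le> 1" unfolding ay'_def using dec(1)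
                  by (auto intro: mult_le_one)
              qed
              have "ay' = 0 \<or> y \<in> convex hull A" using dec(5) by (auto simp: ay'_def)
              then have "ay' *\<^sub>R y + (1 - ay') *\<^sub>R w \<in> convex hull (insert w A)"
                using hull_comb[of ay' y A w] ay'01 by simp
              moreover have "convex hull (insert w A) \<subseteq> V"
                using Suc.IH[of "insert w A"] finA t(4) cardins unfolding w_def by auto
              ultimately have "(1 - s) *\<^sub>R z + s *\<^sub>R b \<in> V" using eq by auto
              then show "\<exists>x'\<in>{s. 0 < s \<and> s \<le> 1 \<and> (1 - s) *\<^sub>R z + s *\<^sub>R b \<in> V}.
                   x' \<noteq> 0 \<and> \<bar>x' - 0\<bar> < e"
                using s0 s1 se by (intro bexI[of _ s]) auto
            qed
          qed
        qed
      qed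
    qed
  qed
qed



lemma fin_val:
  assumes "x \<in> edom f" "proper_fun f"
  shows "f x = ereal (real_of_ereal (f x))"
proof -
  have "f x \<noteq> \<infinity>" using assms(1) unfolding edom_def by auto
  moreover have "f x \<noteq> - \<infinity>" using assms(2) unfolding proper_fun_def by (metis less_irrefl)
  ultimately show ?thesis by (cases "f x") auto
qed

lemma hull_fin:
  assumes "x \<in> convex hull U"
  shows "\<exists>S. finite S \<and> S \<subseteq> U \<and> x \<in> convex hull S"
proof -
  define M where "M = {x. \<exists>S. finite S \<and> S \<subseteq> U \<and> x \<in> convex hull S}"
  have "U \<subseteq> M" unfolding M_def by (auto intro!: exI[of _ "{_}"])
  moreover have "convex M" unfolding convex_alt
  proof (intro ballI allI impI)
    fix x y u assume x: "x \<in> M" and y: "y \<in> M" and u: "0 \<le> u \<and> u \<le> (1::real)"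
    obtain S1 where S1: "finite S1" "S1 \<subseteq> U" "x \<in> convex hull S1" using x M_def by blast
    obtain S2 where S2: "finite S2" "S2 \<subseteq> U" "y \<in> convex hull S2" using y M_def by blast
    have "x \<in> convex hull (S1 \<union> S2)" "y \<in> convex hull (S1 \<union> S2)"
      using S1(3) S2(3) hull_mono[of S1 "S1 \<union> S2" convex] hull_mono[of S2 "S1 \<union> S2" convex] by auto
    then have "(1 - u) *\<^sub>R x + u *\<^sub>R y \<in> convex hull (S1 \<union> S2)"
      using u convex_convex_hull[of "S1 \<union> S2"] unfolding convex_alt by blast
    then show "(1 - u) *\<^sub>R x + u *\<^sub>R y \<in> M" unfolding M_def using S1 S2 by blast
  qed
  ultimately have "convex hull U \<subseteq> M" by (rule hull_minimal)
  then show ?thesis using assms M_def by blast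
qed

theorem mainTheorem8:
  fixes f :: "'a::{real_vector, t2_space} \<Rightarrow> ereal" and U :: "'a set"
  assumes "lc_tvs TYPE('a)"
    and "proper_fun f" and "convex_efun f" and "lsc_efun f"
    and "U \<subseteq> edom f"
    and "self_segment_dense U (edom f)"
  shows "(\<forall>x\<in>convex hull U. f x = closure_fun f U x) \<and>
         (\<forall>x. closure_fun f U x = closure_fun f (convex hull U) x)"
proof -
  note lc = assms(1) and pr = assms(2) and cf = assms(3) and lsc = assms(4) and Ud = assms(5)
  define F where "F = closure (epi_on f U)"
  define V where "V = {x \<in> edom f. \<forall>r. f x \<le> ereal r \<longrightarrow> (x, r) \<in> F}"
  have FF: "closed F" by (simp add: F_def)
  have cd: "convex (edom f)" unfolding convex_alt
  proof (intro ballI allI impI)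
    fix x y u assume x: "x \<in> edom f" and y: "y \<in> edom f" and u: "0 \<le> u \<and> u \<le> (1::real)"
    have "f ((1 - u) *\<^sub>R x + u *\<^sub>R y) \<le> ereal ((1 - u) * real_of_ereal (f x) + u * real_of_ereal (f y))"
      using conv_ineq[OF cf, of x _ y _ u] fin_val[OF x pr] fin_val[OF y pr] u by simp
    then show "(1 - u) *\<^sub>R x + u *\<^sub>R y \<in> edom f" unfolding edom_def
      using ereal_less_eq(3) by (metis (no_types, lifting) PInfty_neq_ereal(1) less_ereal.simps(4) mem_Collect_eq order_le_less_trans ereal_infty_less(1))
  qed
  have sd: "\<forall>x\<in>U. \<forall>y\<in>U. closed_segment x y \<subseteq> closure (closed_segment x y \<inter> U)"
    using assms(6) unfolding self_segment_dense_def by blast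
  have UV: "U \<subseteq> V"
  proof
    fix u assume u: "u \<in> U"
    have "(u, r) \<in> F" if "f u \<le> ereal r" for r
      using that u closure_subset[of "epi_on f U"] unfolding F_def epi_on_def by blast
    then show "u \<in> V" using u Ud unfolding V_def by blast
  qed
  have coV: "convex hull U \<subseteq> V"
  proof
    fix x assume "x \<in> convex hull U"
    then obtain S where S: "finite S" "S \<subseteq> U" "x \<in> convex hull S" using hull_fin by blast
    have "convex hull S \<subseteq> V"
      using main_ind[OF lc cf pr Ud sd cd FF UV V_def S(1,2), of "card S"] by simp
    then show "x \<in> V" using S(3) by blast
  qed
  have ge: "f x \<le> closure_fun f W x" for W x
  proof -
    have "closure (epi_on f W) \<subseteq> epi_on f UNIV"
      by (intro closure_minimal epi_closed[OF lsc]) (auto simp: epi_on_def)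
    then show ?thesis unfolding closure_fun_def
      by (intro Inf_greatest) (auto simp: epi_on_def)
  qed
  have epiV: "epi_on f (convex hull U) \<subseteq> F"
    using coV unfolding V_def epi_on_def by blast
  have cleq: "closure (epi_on f (convex hull U)) = F"
  proof
    show "closure (epi_on f (convex hull U)) \<subseteq> F" using epiV FF by (rule closure_minimal)
    have "epi_on f U \<subseteq> epi_on f (convex hull U)"
      using hull_subset[of U convex] unfolding epi_on_def by blast
    then show "F \<subseteq> closure (epi_on f (convex hull U))" unfolding F_def by (rule closure_mono)
  qed
  have part2: "\<forall>x. closure_fun f U x = closure_fun f (convex hull U) x"
    unfolding closure_fun_def cleq F_def by simp
  have part1: "\<forall>x\<in>convex hull U. f x = closure_fun f U x"
  proof
    fix x assume x: "x \<in> convex hull U"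
    then have xV: "x \<in> V" using coV by blast
    then have xd: "x \<in> edom f" unfolding V_def by blast
    define q where "q = real_of_ereal (f x)"
    have fq: "f x = ereal q" using fin_val[OF xd pr] unfolding q_def .
    then have "(x, q) \<in> F" using xV unfolding V_def by auto
    then have "closure_fun f U x \<le> ereal q" unfolding closure_fun_def F_def
      by (intro Inf_lower) blast
    then show "f x = closure_fun f U x" using ge[of x U] fq by (simp add: antisym)
  qed
  show ?thesis using part1 part2 by blast
qed

end
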